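(* Let $\alpha\ge1$, and run the Dual Metric Algorithm (described in the context) on a dual-metric-loss instance, using in Phase 1 any $\alpha$-approximate most cohesive clusters, with growth factor $c=\frac{3\alpha+\sqrt{\alpha(\alpha+8)}}{4\alpha}$, any processing order of agents in Phase 2 and any tie-breaking. Then the output clustering is in the $\frac{1}{2}\left(\alpha+\sqrt{\alpha(\alpha+8)}+2\right)$-core with respect to the dual metric loss.
   Context: Instance: finite nonempty set $\mathcal{N}$ of $n$ agents, finite nonempty set $\mathcal{M}$ of feasible centers, positive integer $k$, pseudometric $d^m$ on $\mathcal{N}$, pseudometric $d^c$ on $\mathcal{N}\cup\mathcal{M}$. Dual metric loss: $\ell_i(C,x)=\max_{j\in C}d^m(i,j)+d^c(i,x)$ for $i\in C\subseteq\mathcal{N}$, $x\in\mathcal{M}$. A clustering is $\mathcal{X}=\{(C_1,x_1),\dots,(C_k,x_k)\}$ with $C_t$ pairwise disjoint (some possibly empty), union $\mathcal{N}$, $x_t\in\mathcal{M}$; $\ell_i(\mathcal{X})=\ell_i(C_t,x_t)$ where $i\in C_t$. For $\beta\ge1$, $\mathcal{X}$ is in the $\beta$-core if there is no $S\subseteq\mathcal{N}$ with $|S|\ge n/k$ and $y\in\mathcal{M}$ with $\beta\,\ell_i(S,y)<\ell_i(\mathcal{X})$ for all $i\in S$. $\alpha$-approximate most cohesive cluster ($\alpha$-MCC) from an agent set $A\subseteq\mathcal{N}$ (threshold $n/k$): a pair $(C,x)$ with $C\subseteq A$, $|C|\ge\min(|A|,n/k)$, $x\in\mathcal{M}$, such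 that $\max_{i\in C}\ell_i(C,x)\le\alpha\max_{i\in S}\ell_i(S,y)$ for every $S\subseteq A$ with $|S|\ge\min(|A|,n/k)$ and every $y\in\mathcal{M}$. Dual Metric Algorithm (parameters $c\ge1$, $\alpha$). Phase 1: set $A\leftarrow\mathcal{N}$, $t\leftarrow1$; while $A\ne\emptyset$: choose an $\alpha$-MCC $(\hat C_t,x_t)$ from $A$, set $r_t=\max_{i\in\hat C_t}\ell_i(\hat C_t,x_t)$, $A\leftarrow A\setminus\hat C_t$, $t\leftarrow t+1$. Let $T$ be the set of indices created (at most $k$), and for $i\in\mathcal{N}$ let $\hat t(i)$ be the index with $i\in\hat C_{\hat t(i)}$. Phase 2: set $C_t\leftarrow\hat C_t$ for $t\in T$; for each agent $i$ in turn: let $t=\hat t(i)$; let $V_i=\{t'\in T:\ d^c(j,x_{t'})+d^m(j,i)\le c\,r_{t'}\text{ for all } j\in\hat C_{t'}\}$; define $\Phi(i,t')=d^c(i,x_{t'})+c\,r_{t'}+\min_{j\in\hat C_{t'}}\big(d^m(i,j)-d^c(j,x_{t'})\big)$; pick $t^*\in\arg\min_{t'\in V_i}\Phi(i,t')$; if $\Phi(i,t^* )<c\,r_t$, remove $i$ from $C_t$ and add it to $C_{t^*}$. Output $\{(C_t,x_t):t\in T\}$, padded with empty clusters (arbitrary centers) to $k$ clusters. *)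

theory Defs
  imports Complex_Main
begin

definition pseudometric_on :: "'p set \<Rightarrow> ('p \<Rightarrow> 'p \<Rightarrow> real) \<Rightarrow> bool" where
  "pseudometric_on S d \<longleftrightarrow>
     (\<forall>x\<in>S. d x x = 0) \<and>
     (\<forall>x\<in>S. \<forall>y\<in>S. d x y = d y x) \<and>
     (\<forall>x\<in>S. \<forall>y\<in>S. \<forall>z\<in>S. d x z \<le> d x y + d y z)"

definition dual_loss ::
  "('p \<Rightarrow> 'p \<Rightarrow> real) \<Rightarrow> ('p \<Rightarrow> 'p \<Rightarrow> real) \<Rightarrow> 'p \<Rightarrow> 'p set \<Rightarrow> 'p \<Rightarrow> real" where
  "dual_loss dm dc i C x = Max ((\<lambda>j. dm i j) ` C) + dc i x"

definition max_loss ::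
  "('p \<Rightarrow> 'p \<Rightarrow> real) \<Rightarrow> ('p \<Rightarrow> 'p \<Rightarrow> real) \<Rightarrow> 'p set \<Rightarrow> 'p \<Rightarrow> real" where
  "max_loss dm dc C x = Max ((\<lambda>i. dual_loss dm dc i C x) ` C)"

definition is_clustering ::
  "'p set \<Rightarrow> 'p set \<Rightarrow> nat \<Rightarrow> ('p set \<times> 'p) list \<Rightarrow> bool" where
  "is_clustering N M k X \<longleftrightarrow>
     length X = k \<and>
     (\<forall>t<k. \<forall>s<k. t \<noteq> s \<longrightarrow> fst (X ! t) \<inter> fst (X ! s) = {}) \<and>
     (\<Union>t<k. fst (X ! t)) = N \<and>
     (\<forall>t<k. snd (X ! t) \<in> M)"

definition clustering_loss ::
  "('p \<Rightarrow> 'p \<Rightarrow> real) \<Rightarrow> ('p \<Rightarrow> 'p \<Rightarrow> real) \<Rightarrow> ('p set \<times> 'p) list \<Rightarrow> 'p \<Rightarrow> real" where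
  "clustering_loss dm dc X i =
     (let t = (THE t. t < length X \<and> i \<in> fst (X ! t))
      in dual_loss dm dc i (fst (X ! t)) (snd (X ! t)))"

definition in_core ::
  "'p set \<Rightarrow> 'p set \<Rightarrow> nat \<Rightarrow> ('p \<Rightarrow> 'p \<Rightarrow> real) \<Rightarrow> ('p \<Rightarrow> 'p \<Rightarrow> real)
   \<Rightarrow> real \<Rightarrow> ('p set \<times> 'p) list \<Rightarrow> bool" where
  "in_core N M k dm dc \<beta> X \<longleftrightarrow>
     is_clustering N M k X \<and>
     \<not> (\<exists>S y. S \<subseteq> N \<and> real (card S) \<ge> real (card N) / real k \<and> y \<in> M \<and>
              (\<forall>i\<in>S. \<beta> * dual_loss dm dc i S y < clustering_loss dm dc X i))"

definition is_MCC ::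
  "'p set \<Rightarrow> 'p set \<Rightarrow> nat \<Rightarrow> ('p \<Rightarrow> 'p \<Rightarrow> real) \<Rightarrow> ('p \<Rightarrow> 'p \<Rightarrow> real)
   \<Rightarrow> real \<Rightarrow> 'p set \<Rightarrow> 'p set \<times> 'p \<Rightarrow> bool" where
  "is_MCC N M k dm dc \<alpha> A Cx \<longleftrightarrow>
     (let C = fst Cx; x = snd Cx; q = min (real (card A)) (real (card N) / real k) in
      C \<subseteq> A \<and> real (card C) \<ge> q \<and> x \<in> M \<and>
      (\<forall>S y. S \<subseteq> A \<and> real (card S) \<ge> q \<and> y \<in> M \<longrightarrow>
              max_loss dm dc C x \<le> \<alpha> * max_loss dm dc S y))"

definition remaining :: "'p set \<Rightarrow> ('p set \<times> 'p) list \<Rightarrow> nat \<Rightarrow> 'p set" where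
  "remaining N P t = N - (\<Union>s<t. fst (P ! s))"

definition phase1_run ::
  "'p set \<Rightarrow> 'p set \<Rightarrow> nat \<Rightarrow> ('p \<Rightarrow> 'p \<Rightarrow> real) \<Rightarrow> ('p \<Rightarrow> 'p \<Rightarrow> real)
   \<Rightarrow> real \<Rightarrow> ('p set \<times> 'p) list \<Rightarrow> bool" where
  "phase1_run N M k dm dc \<alpha> P \<longleftrightarrow>
     (\<forall>t<length P. remaining N P t \<noteq> {} \<and> is_MCC N M k dm dc \<alpha> (remaining N P t) (P ! t)) \<and>
     remaining N P (length P) = {}"

definition radius ::
  "('p \<Rightarrow> 'p \<Rightarrow> real) \<Rightarrow> ('p \<Rightarrow> 'p \<Rightarrow> real) \<Rightarrow> ('p set \<times> 'p) list \<Rightarrow> nat \<Rightarrow> real" where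
  "radius dm dc P t = max_loss dm dc (fst (P ! t)) (snd (P ! t))"

definition Vset ::
  "('p \<Rightarrow> 'p \<Rightarrow> real) \<Rightarrow> ('p \<Rightarrow> 'p \<Rightarrow> real) \<Rightarrow> real \<Rightarrow> ('p set \<times> 'p) list \<Rightarrow> 'p \<Rightarrow> nat set" where
  "Vset dm dc c P i =
     {t'. t' < length P \<and>
          (\<forall>j\<in>fst (P ! t'). dc j (snd (P ! t')) + dm j i \<le> c * radius dm dc P t')}"

definition Phi ::
  "('p \<Rightarrow> 'p \<Rightarrow> real) \<Rightarrow> ('p \<Rightarrow> 'p \<Rightarrow> real) \<Rightarrow> real \<Rightarrow> ('p set \<times> 'p) list \<Rightarrow> 'p \<Rightarrow> nat \<Rightarrow> real" where
  "Phi dm dc c P i t' =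
     dc i (snd (P ! t')) + c * radius dm dc P t' +
     Min ((\<lambda>j. dm i j - dc j (snd (P ! t'))) ` fst (P ! t'))"

text \<open>Phase 2: g i is the index of the final cluster of agent i.  Since V_i and Phi depend only on the Phase 1 data, the outcome
  for agent i does not depend on the processing order; the set of possible outcomes
  over all orders and tie-breakings is exactly the set of g below.\<close>
definition phase2_choice ::
  "'p set \<Rightarrow> ('p \<Rightarrow> 'p \<Rightarrow> real) \<Rightarrow> ('p \<Rightarrow> 'p \<Rightarrow> real) \<Rightarrow> real
   \<Rightarrow> ('p set \<times> 'p) list \<Rightarrow> ('p \<Rightarrow> nat) \<Rightarrow> bool" where
  "phase2_choice N dm dc c P g \<longleftrightarrow>
     (\<forall>t<length P. \<forall>i\<in>fst (P ! t).
        \<exists>tstar\<in>Vset dm dc c P i.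
          (\<forall>t'\<in>Vset dm dc c P i. Phi dm dc c P i tstar \<le> Phi dm dc c P i t') \<and>
          g i = (if Phi dm dc c P i tstar < c * radius dm dc P t then tstar else t))"

text \<open>Output: the Phase 2 clusters with Phase 1 centers, padded with empty clusters
  (arbitrary centers from M) to k clusters.\<close>
definition algorithm_output ::
  "'p set \<Rightarrow> ('p set \<times> 'p) list \<Rightarrow> ('p \<Rightarrow> nat) \<Rightarrow> 'p list \<Rightarrow> ('p set \<times> 'p) list" where
  "algorithm_output N P g pad =
     map (\<lambda>t. ({i\<in>N. g i = t}, snd (P ! t))) [0..<length P] @ map (\<lambda>y. ({}, y)) pad"

end

theory Submission
  imports Defs
begin

lemma consts_facts:
  fixes \<alpha> c \<beta> :: real
  assumes "\<alpha> \<ge> 1" "c = (3 * \<alpha> + sqrt (\<alpha> * (\<alpha> + 8))) / (4 * \<alpha>)"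
    "\<beta> = (\<alpha> + sqrt (\<alpha> * (\<alpha> + 8)) + 2) / 2"
  shows "c \<ge> 1" "\<beta> > 0" "c = \<beta> * (c - 1)" "c * \<alpha> * (\<beta> + 1) + \<beta> = \<beta> * \<beta>"
proof -
  define s where "s = sqrt (\<alpha> * (\<alpha> + 8))"
  have nn: "0 \<le> \<alpha> * (\<alpha> + 8)" using assms(1) by (intro mult_nonneg_nonneg) auto
  have s2: "s * s = \<alpha> * \<alpha> + 8 * \<alpha>" unfolding s_def
    using real_sqrt_mult_self[of "\<alpha> * (\<alpha> + 8)"] nn
    by (metis distrib_left mult.commute real_sqrt_abs2 abs_of_nonneg real_sqrt_mult_self)
  have s0: "s \<ge> 0" unfolding s_def using nn by simp
  have sa: "s \<ge> \<alpha>"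
  proof (rule ccontr)
    assume "\<not> s \<ge> \<alpha>"
    then have "s < \<alpha>" by simp
    then have "s * s < \<alpha> * \<alpha>" using s0 by (intro mult_strict_mono) auto
    then show False using s2 assms(1) by linarith
  qed
  have c4: "4 * \<alpha> * c = 3 * \<alpha> + s" using assms(1,2) unfolding s_def by simp
  have b2: "2 * \<beta> = \<alpha> + s + 2" using assms(3) unfolding s_def by simp
  have "4 * \<alpha> * (c - 1) \<ge> 0" using c4 sa by (simp add: algebra_simps)
  then show "c \<ge> 1" using assms(1) by (simp add: zero_le_mult_iff)
  show "\<beta> > 0" using b2 s0 assms(1) by linarith
  show "c = \<beta> * (c - 1)"
  proof -
    have "4 * \<alpha> * (\<beta> * (c - 1)) = 4 * \<alpha> * c" using c4 b2 s2 by algebra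
    then show ?thesis using assms(1) by simp
  qed
  show "c * \<alpha> * (\<beta> + 1) + \<beta> = \<beta> * \<beta>"
    using c4 b2 s2 by algebra
qed

locale dmsetup =
  fixes N M :: "'p set" and k :: nat
    and dm dc :: "'p \<Rightarrow> 'p \<Rightarrow> real"
    and \<alpha> c :: real
    and P :: "('p set \<times> 'p) list" and g :: "'p \<Rightarrow> nat" and pad :: "'p list"
  assumes finN: "finite N" and neN: "N \<noteq> {}" and kpos: "k > 0"
    and pm: "pseudometric_on N dm"
    and pc: "pseudometric_on (N \<union> M) dc"
    and c1: "c \<ge> 1"
    and ph1: "phase1_run N M k dm dc \<alpha> P"
    and ph2: "phase2_choice N dm dc c P g"
    and padM: "set pad \<subseteq> M" and padlen: "length pad = k - length P"
begin

lemma dm_nn: "i \<in> N \<Longrightarrow> j \<in> N \<Longrightarrow> dm i j \<ge> 0"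
proof -
  assume a: "i \<in> N" "j \<in> N"
  have "dm i i \<le> dm i j + dm j i" "dm i i = 0" "dm j i = dm i j"
    using pm a unfolding pseudometric_on_def by blast+
  then show ?thesis by linarith
qed
lemma dm_sym: "i \<in> N \<Longrightarrow> j \<in> N \<Longrightarrow> dm i j = dm j i"
  using pm unfolding pseudometric_on_def by blast
lemma dm_tri: "i \<in> N \<Longrightarrow> j \<in> N \<Longrightarrow> l \<in> N \<Longrightarrow> dm i l \<le> dm i j + dm j l"
  using pm unfolding pseudometric_on_def by blast
lemma dm_refl: "i \<in> N \<Longrightarrow> dm i i = 0"
  using pm unfolding pseudometric_on_def by blast
lemma dc_nn: "i \<in> N \<union> M \<Longrightarrow> j \<in> N \<union> M \<Longrightarrow> dc i j \<ge> 0"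
proof -
  assume a: "i \<in> N \<union> M" "j \<in> N \<union> M"
  have "dc i i \<le> dc i j + dc j i" "dc i i = 0" "dc j i = dc i j"
    using pc a unfolding pseudometric_on_def by blast+
  then show ?thesis by linarith
qed
lemma dc_sym: "i \<in> N \<union> M \<Longrightarrow> j \<in> N \<union> M \<Longrightarrow> dc i j = dc j i"
  using pc unfolding pseudometric_on_def by blast
lemma dc_tri: "i \<in> N \<union> M \<Longrightarrow> j \<in> N \<union> M \<Longrightarrow> l \<in> N \<union> M \<Longrightarrow> dc i l \<le> dc i j + dc j l"
  using pc unfolding pseudometric_on_def by blast

abbreviation "m \<equiv> length P"
abbreviation "Ch t \<equiv> fst (P ! t)"
abbreviation "xc t \<equiv> snd (P ! t)"
abbreviation "rem t \<equiv> remaining N P t"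
abbreviation "r t \<equiv> radius dm dc P t"
abbreviation "V i \<equiv> Vset dm dc c P i"
abbreviation "Ph i t \<equiv> Phi dm dc c P i t"
abbreviation "Cf t \<equiv> {i \<in> N. g i = t}"

lemma rem_sub: "rem t \<subseteq> N" unfolding remaining_def by auto
lemma rem_0: "rem 0 = N" unfolding remaining_def by auto
lemma rem_Suc: "rem (Suc t) = rem t - Ch t"
  unfolding remaining_def by (auto simp: lessThan_Suc)

lemma mcc:
  assumes "t < m"
  shows "Ch t \<subseteq> rem t" "real (card (Ch t)) \<ge> min (real (card (rem t))) (real (card N) / real k)"
    "xc t \<in> M" "rem t \<noteq> {}"
    "\<And>S y. S \<subseteq> rem t \<Longrightarrow> real (card S) \<ge> min (real (card (rem t))) (real (card N) / real k)
       \<Longrightarrow> y \<in> M \<Longrightarrow> max_loss dm dc (Ch t) (xc t) \<le> \<alpha> * max_loss dm dc S y"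
  using ph1 assms unfolding phase1_run_def is_MCC_def Let_def by blast+

lemma Ch_sub: "t < m \<Longrightarrow> Ch t \<subseteq> N" using mcc(1) rem_sub by blast
lemma Ch_fin: "t < m \<Longrightarrow> finite (Ch t)" using Ch_sub finN finite_subset by blast

lemma nk_pos: "real (card N) / real k > 0"
  using finN neN kpos by (simp add: card_gt_0_iff)

lemma Ch_ne: assumes "t < m" shows "Ch t \<noteq> {}"
proof -
  have "finite (rem t)" using rem_sub finN finite_subset by blast
  then have "card (rem t) > 0" using mcc(4)[OF assms] by (simp add: card_gt_0_iff)
  then have "real (card (Ch t)) > 0" using mcc(2)[OF assms] nk_pos by linarith
  then show ?thesis by auto
qed

lemma Ch_disj: assumes "s < t" "t < m" shows "Ch s \<inter> Ch t = {}"
  using mcc(1)[OF assms(2)] assms(1) unfolding remaining_def by blast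

lemma Ch_uniq: "s < m \<Longrightarrow> t < m \<Longrightarrow> i \<in> Ch s \<Longrightarrow> i \<in> Ch t \<Longrightarrow> s = t"
  by (metis Ch_disj IntI empty_iff linorder_neqE_nat)

lemma cover: assumes "i \<in> N" shows "\<exists>t<m. i \<in> Ch t"
  using ph1 assms unfolding phase1_run_def remaining_def by blast

lemma m_pos: "m > 0"
  using ph1 neN rem_0 unfolding phase1_run_def by (metis gr0I)

lemma rem_card: "t < m \<Longrightarrow> real (card (rem t)) \<le> real (card N) - real t * (real (card N) / real k)"
proof (induction t)
  case 0 then show ?case by (simp add: rem_0)
next
  case (Suc t)
  have tm: "t < m" using Suc.prems by simp
  have finr: "finite (rem t)" using rem_sub finN finite_subset by blast
  have sub: "Ch t \<subseteq> rem t" using mcc(1)[OF tm] .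
  have ne: "rem (Suc t) \<noteq> {}" using mcc(4)[OF Suc.prems] .
  have neq: "Ch t \<noteq> rem t" using ne rem_Suc by auto
  have lt: "card (Ch t) < card (rem t)" using sub neq finr by (meson psubsetI psubset_card_mono)
  have ge: "real (card (Ch t)) \<ge> real (card N) / real k" using mcc(2)[OF tm] lt by linarith
  have "card (rem (Suc t)) = card (rem t) - card (Ch t)"
    using rem_Suc card_Diff_subset[OF finite_subset[OF sub finr] sub] by simp
  then have "real (card (rem (Suc t))) = real (card (rem t)) - real (card (Ch t))"
    using lt by simp
  moreover have "real (Suc t) * (real (card N) / real k) = real t * (real (card N) / real k) + real (card N) / real k"
    by (simp add: algebra_simps add_divide_distrib)
  ultimately show ?case using Suc.IH[OF tm] ge by linarith
qed

lemma m_le_k: "m \<le> k"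
proof -
  define t where "t = m - 1"
  have tm: "t < m" using m_pos t_def by simp
  have finr: "finite (rem t)" using rem_sub finN finite_subset by blast
  have "card (rem t) > 0" using mcc(4)[OF tm] finr by (simp add: card_gt_0_iff)
  then have "1 \<le> real (card N) - real t * (real (card N) / real k)" using rem_card[OF tm] by linarith
  then have "real t * (real (card N) / real k) < real (card N)" by linarith
  then have "real t * real (card N) < real k * real (card N)" using kpos
    by (simp add: field_simps)
  then have "real t < real k" using finN neN
    by (metis mult_less_cancel_right mult.commute of_nat_0_le_iff not_less)
  then show ?thesis using t_def m_pos by linarith
qed


abbreviation "X \<equiv> algorithm_output N P g pad"

lemma X_len: "length X = k"
  using padlen m_le_k unfolding algorithm_output_def by simp

lemma X_lo: "t < m \<Longrightarrow> X ! t = (Cf t, xc t)"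
  unfolding algorithm_output_def by (simp add: nth_append)

lemma X_hi: "m \<le> t \<Longrightarrow> t < k \<Longrightarrow> X ! t = ({}, pad ! (t - m))"
  unfolding algorithm_output_def using padlen by (simp add: nth_append)

lemma choice:
  assumes "t < m" "i \<in> Ch t"
  shows "\<exists>ts\<in>V i. (\<forall>t'\<in>V i. Ph i ts \<le> Ph i t') \<and>
          g i = (if Ph i ts < c * r t then ts else t)"
  using ph2 assms unfolding phase2_choice_def by blast

lemma V_lt: "t \<in> V i \<Longrightarrow> t < m" unfolding Vset_def by simp

lemma g_lt: assumes "i \<in> N" shows "g i < m"
proof -
  obtain t where t: "t < m" "i \<in> Ch t" using cover assms by blast
  show ?thesis using choice[OF t] t(1) V_lt by (metis)
qed

lemma fstX: "t < k \<Longrightarrow> fst (X ! t) = (if t < m then Cf t else {})"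
  using X_lo X_hi by simp

lemma is_clust: "is_clustering N M k X"
  unfolding is_clustering_def
proof (intro conjI allI impI)
  show "length X = k" by (rule X_len)
next
  fix t s assume "t < k" "s < k" "t \<noteq> s"
  then show "fst (X ! t) \<inter> fst (X ! s) = {}" using fstX by auto
next
  show "(\<Union>t<k. fst (X ! t)) = N"
  proof
    show "(\<Union>t<k. fst (X ! t)) \<subseteq> N" using fstX by auto
    show "N \<subseteq> (\<Union>t<k. fst (X ! t))"
    proof
      fix i assume i: "i \<in> N"
      have "g i < k" using g_lt[OF i] m_le_k by simp
      then show "i \<in> (\<Union>t<k. fst (X ! t))" using fstX[of "g i"] g_lt[OF i] i by auto
    qed
  qed
next
  fix t assume t: "t < k"
  show "snd (X ! t) \<in> M"
  proof (cases "t < m")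
    case True then show ?thesis using X_lo mcc(3) by simp
  next
    case False
    then have "t - m < length pad" using padlen t by simp
    then show ?thesis using X_hi[of t] False t padM by (simp add: nth_mem subsetD)
  qed
qed

lemma cl_loss: assumes "i \<in> N"
  shows "clustering_loss dm dc X i = dual_loss dm dc i (Cf (g i)) (xc (g i))"
proof -
  have gk: "g i < k" using g_lt[OF assms] m_le_k by simp
  have "(THE t. t < length X \<and> i \<in> fst (X ! t)) = g i"
  proof (rule the_equality)
    show "g i < length X \<and> i \<in> fst (X ! g i)" using gk X_len fstX[OF gk] g_lt[OF assms] assms by simp
  next
    fix t assume "t < length X \<and> i \<in> fst (X ! t)"
    then show "t = g i" using fstX X_len by (auto split: if_splits)
  qed
  then show ?thesis unfolding clustering_loss_def Let_def using X_lo g_lt[OF assms] by simp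
qed

lemma rad_bound: assumes "t < m" "j \<in> Ch t" "j' \<in> Ch t"
  shows "dm j j' + dc j (xc t) \<le> r t"
proof -
  have f: "finite (Ch t)" using Ch_fin[OF assms(1)] .
  have "dm j j' \<le> Max ((\<lambda>l. dm j l) ` Ch t)" using f assms(3) by (intro Max_ge) auto
  then have "dm j j' + dc j (xc t) \<le> dual_loss dm dc j (Ch t) (xc t)" unfolding dual_loss_def by simp
  also have "\<dots> \<le> r t" unfolding radius_def max_loss_def using f assms(2) by (intro Max_ge) auto
  finally show ?thesis .
qed

lemma rad_nn: assumes "t < m" shows "r t \<ge> 0"
proof -
  obtain j where j: "j \<in> Ch t" using Ch_ne[OF assms] by blast
  have jN: "j \<in> N" using j Ch_sub[OF assms] by blast
  have "dm j j + dc j (xc t) \<ge> 0" using dm_refl[OF jN] dc_nn[of j "xc t"] jN mcc(3)[OF assms] by simp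
  then show ?thesis using rad_bound[OF assms j j] by linarith
qed

lemma Cf_member: assumes "t' < m" "j' \<in> N" "g j' = t'"
  shows "j' \<in> Ch t' \<or> t' \<in> V j'"
proof -
  obtain s where s: "s < m" "j' \<in> Ch s" using cover assms(2) by blast
  obtain ts where ts: "ts \<in> V j'" "g j' = (if Ph j' ts < c * r s then ts else s)"
    using choice[OF s] by blast
  show ?thesis using ts s assms(3) by (auto split: if_splits)
qed

lemma loss_le_Phi: assumes "i \<in> N" "t' \<in> V i" "g i = t'"
  shows "dual_loss dm dc i (Cf t') (xc t') \<le> Ph i t'"
proof -
  have t': "t' < m" using V_lt assms(2) .
  have f: "finite (Ch t')" using Ch_fin[OF t'] .
  define F where "F = (\<lambda>j. dm i j - dc j (xc t'))"
  have "Min (F ` Ch t') \<in> F ` Ch t'" using f Ch_ne[OF t'] by (intro Min_in) auto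
  then obtain j0 where j0: "j0 \<in> Ch t'" "Min (F ` Ch t') = F j0" by auto
  have j0N: "j0 \<in> N" using j0 Ch_sub[OF t'] by blast
  have "Max ((\<lambda>l. dm i l) ` Cf t') \<le> c * r t' + F j0"
  proof (subst Max_le_iff)
    show "finite ((\<lambda>l. dm i l) ` Cf t')" using finN by simp
    show "(\<lambda>l. dm i l) ` Cf t' \<noteq> {}" using assms by auto
    show "\<forall>a\<in>(\<lambda>l. dm i l) ` Cf t'. a \<le> c * r t' + F j0"
    proof
      fix a assume "a \<in> (\<lambda>l. dm i l) ` Cf t'"
      then obtain j' where j': "j' \<in> N" "g j' = t'" "a = dm i j'" by auto
      have tri: "dm i j' \<le> dm i j0 + dm j0 j'" using dm_tri assms(1) j0N j'(1) by blast
      have "dm j0 j' \<le> c * r t' - dc j0 (xc t')"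
      proof (cases "j' \<in> Ch t'")
        case True
        have "dm j0 j' + dc j0 (xc t') \<le> r t'" using rad_bound[OF t' j0(1) True] .
        moreover have "r t' \<le> c * r t'" using c1 rad_nn[OF t'] by (simp add: mult_le_cancel_right1)
        ultimately show ?thesis by linarith
      next
        case False
        then have "t' \<in> V j'" using Cf_member[OF t' j'(1,2)] by blast
        then have "dc j0 (xc t') + dm j0 j' \<le> c * r t'" using j0(1) unfolding Vset_def by blast
        then show ?thesis by linarith
      qed
      then show "a \<le> c * r t' + F j0" using tri j'(3) unfolding F_def by linarith
    qed
  qed
  then show ?thesis unfolding dual_loss_def Phi_def F_def[symmetric] using j0(2) by linarith
qed

lemma loss_stay: assumes "t < m" "i \<in> Ch t" "g i = t"
  shows "dual_loss dm dc i (Cf t) (xc t) \<le> c * r t"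
proof -
  have iN: "i \<in> N" using assms Ch_sub by blast
  have "Max ((\<lambda>l. dm i l) ` Cf t) \<le> c * r t - dc i (xc t)"
  proof (subst Max_le_iff)
    show "finite ((\<lambda>l. dm i l) ` Cf t)" using finN by simp
    show "(\<lambda>l. dm i l) ` Cf t \<noteq> {}" using assms iN by auto
    show "\<forall>a\<in>(\<lambda>l. dm i l) ` Cf t. a \<le> c * r t - dc i (xc t)"
    proof
      fix a assume "a \<in> (\<lambda>l. dm i l) ` Cf t"
      then obtain j' where j': "j' \<in> N" "g j' = t" "a = dm i j'" by auto
      show "a \<le> c * r t - dc i (xc t)"
      proof (cases "j' \<in> Ch t")
        case True
        have "dm i j' + dc i (xc t) \<le> r t" using rad_bound[OF assms(1,2) True] .
        moreover have "r t \<le> c * r t" using c1 rad_nn[OF assms(1)] by (simp add: mult_le_cancel_right1)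
        ultimately show ?thesis using j'(3) by linarith
      next
        case False
        then have "t \<in> V j'" using Cf_member[OF assms(1) j'(1,2)] by blast
        then have "dc i (xc t) + dm i j' \<le> c * r t" using assms(2) unfolding Vset_def by blast
        then show ?thesis using j'(3) by linarith
      qed
    qed
  qed
  then show ?thesis unfolding dual_loss_def by linarith
qed

abbreviation "Lf i \<equiv> dual_loss dm dc i (Cf (g i)) (xc (g i))"

lemma L_bounds: assumes "t < m" "i \<in> Ch t"
  shows "Lf i \<le> c * r t" "\<And>t'. t' \<in> V i \<Longrightarrow> Lf i \<le> Ph i t'"
proof -
  have iN: "i \<in> N" using assms Ch_sub by blast
  obtain ts where ts: "ts \<in> V i" "\<forall>t'\<in>V i. Ph i ts \<le> Ph i t'"
      "g i = (if Ph i ts < c * r t then ts else t)"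
    using choice[OF assms] by blast
  have "Lf i \<le> c * r t \<and> Lf i \<le> Ph i ts"
  proof (cases "Ph i ts < c * r t")
    case True
    then have "g i = ts" using ts(3) by simp
    then have "Lf i \<le> Ph i ts" using loss_le_Phi[OF iN ts(1)] by simp
    then show ?thesis using True by linarith
  next
    case False
    then have "g i = t" using ts(3) by simp
    then have "Lf i \<le> c * r t" using loss_stay[OF assms] by simp
    then show ?thesis using False by linarith
  qed
  then show "Lf i \<le> c * r t" "\<And>t'. t' \<in> V i \<Longrightarrow> Lf i \<le> Ph i t'"
    using ts(2) by force+
qed


lemma core_main:
  assumes bpos: "\<beta> > 0" and ceq: "c = \<beta> * (c - 1)" and beq: "c * \<alpha> * (\<beta> + 1) + \<beta> = \<beta> * \<beta>"
  shows "in_core N M k dm dc \<beta> X"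
  unfolding in_core_def
proof (intro conjI is_clust notI)
  assume "\<exists>S y. S \<subseteq> N \<and> real (card N) / real k \<le> real (card S) \<and> y \<in> M \<and>
            (\<forall>i\<in>S. \<beta> * dual_loss dm dc i S y < clustering_loss dm dc X i)"
  then obtain S y where SN: "S \<subseteq> N" and Scard: "real (card N) / real k \<le> real (card S)"
    and yM: "y \<in> M" and blk: "\<And>i. i \<in> S \<Longrightarrow> \<beta> * dual_loss dm dc i S y < clustering_loss dm dc X i"
    by blast
  have finS: "finite S" using SN finN finite_subset by blast
  have Sne: "S \<noteq> {}" using Scard nk_pos by auto
  define R where "R = max_loss dm dc S y"
  define Q where "Q = (\<lambda>t. t < m \<and> S \<inter> Ch t \<noteq> {})"
  define t0 where "t0 = (LEAST t. Q t)"
  have exQ: "\<exists>t. Q t"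
  proof -
    obtain i where "i \<in> S" using Sne by blast
    then obtain t where "t < m" "i \<in> Ch t" using cover SN by blast
    then show ?thesis unfolding Q_def using \<open>i \<in> S\<close> by blast
  qed
  have Qt0: "Q t0" unfolding t0_def using LeastI_ex[OF exQ] .
  have t0m: "t0 < m" using Qt0 Q_def by simp
  have before: "S \<inter> Ch s = {}" if "s < t0" for s
  proof (rule ccontr)
    assume "S \<inter> Ch s \<noteq> {}"
    then have "Q s" using that t0m unfolding Q_def by simp
    then have "t0 \<le> s" unfolding t0_def by (rule Least_le)
    then show False using that by simp
  qed
  have Srem: "S \<subseteq> rem t0" using SN before unfolding remaining_def by blast
  have "real (card S) \<ge> min (real (card (rem t0))) (real (card N) / real k)" using Scard by linarith
  then have r0: "r t0 \<le> \<alpha> * R" using mcc(5)[OF t0m Srem _ yM] unfolding radius_def R_def by blast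
  obtain i where iS: "i \<in> S" and iC: "i \<in> Ch t0" using Qt0 Q_def by blast
  have "R \<in> (\<lambda>i. dual_loss dm dc i S y) ` S" unfolding R_def max_loss_def
    using finS Sne by (intro Max_in) auto
  then obtain a where aS: "a \<in> S" and aR: "dual_loss dm dc a S y = R" by auto
  have iN: "i \<in> N" and aN: "a \<in> N" using iS aS SN by auto
  have xM: "xc t0 \<in> M" using mcc(3)[OF t0m] .
  define li where "li = dual_loss dm dc i S y"
  have "dm i a \<le> Max ((\<lambda>l. dm i l) ` S)" using finS aS by (intro Max_ge) auto
  then have li1: "dm i a + dc i y \<le> li" unfolding li_def dual_loss_def by simp
  have "dm a i \<le> Max ((\<lambda>l. dm a l) ` S)" using finS iS by (intro Max_ge) auto
  then have R1: "dm a i + dc a y \<le> R" using aR unfolding dual_loss_def by simp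
  have dmia: "dm i a \<ge> 0" using dm_nn iN aN by blast
  have dciy: "dc i y \<ge> 0" using dc_nn iN yM by blast
  have Li: "Lf i \<le> c * r t0" using L_bounds(1)[OF t0m iC] .
  have bli: "\<beta> * li < c * r t0" using blk[OF iS] cl_loss[OF iN] Li unfolding li_def by linarith
  have "\<beta> * dm i a \<le> \<beta> * li" using li1 dciy bpos by (intro mult_left_mono) auto
  moreover have "c * r t0 = \<beta> * ((c - 1) * r t0)"
    using ceq by (metis mult.assoc)
  ultimately have "\<beta> * dm i a < \<beta> * ((c - 1) * r t0)" using bli by linarith
  then have dmia2: "dm i a < (c - 1) * r t0" using bpos by simp
  have "\<beta> * dc i y \<le> \<beta> * li" using li1 dmia bpos by (intro mult_left_mono) auto
  then have bdc: "\<beta> * dc i y < c * r t0" using bli by linarith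
  have t0V: "t0 \<in> V a" unfolding Vset_def
  proof (intro CollectI conjI ballI t0m)
    fix j assume jC: "j \<in> Ch t0"
    have jN: "j \<in> N" using jC Ch_sub[OF t0m] by blast
    have "dm j a \<le> dm j i + dm i a" using dm_tri jN iN aN by blast
    moreover have "dm j i + dc j (xc t0) \<le> r t0" using rad_bound[OF t0m jC iC] .
    ultimately show "dc j (xc t0) + dm j a \<le> c * radius dm dc P t0" using dmia2
      by (simp add: algebra_simps)
  qed
  have fC: "finite (Ch t0)" using Ch_fin[OF t0m] .
  have "Min ((\<lambda>j. dm a j - dc j (xc t0)) ` Ch t0) \<le> dm a i - dc i (xc t0)"
    using fC iC by (intro Min_le) auto
  then have Ph1: "Ph a t0 \<le> dc a (xc t0) + c * r t0 + (dm a i - dc i (xc t0))"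
    unfolding Phi_def by linarith
  have "dc a (xc t0) \<le> dc a i + dc i (xc t0)" using dc_tri aN iN xM by blast
  moreover have "dc a i \<le> dc a y + dc y i" using dc_tri aN iN yM by blast
  moreover have "dc y i = dc i y" using dc_sym iN yM by blast
  ultimately have Ph2: "Ph a t0 \<le> c * r t0 + R + dc i y" using Ph1 R1 by linarith
  obtain ta where ta: "ta < m" "a \<in> Ch ta" using cover aN by blast
  have La: "Lf a \<le> c * r t0 + R + dc i y" using L_bounds(2)[OF ta t0V] Ph2 by linarith
  have bLa: "\<beta> * R < Lf a" using blk[OF aS] cl_loss[OF aN] aR by simp
  have "\<beta> * Lf a \<le> \<beta> * (c * r t0 + R + dc i y)" using La bpos by (intro mult_left_mono) auto
  also have "\<dots> = \<beta> * (c * r t0) + \<beta> * R + \<beta> * dc i y" by (simp add: algebra_simps)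
  also have "\<dots> < \<beta> * (c * r t0) + \<beta> * R + c * r t0" using bdc by linarith
  also have "\<dots> = (c * (\<beta> + 1)) * r t0 + \<beta> * R" by (simp add: algebra_simps)
  also have "\<dots> \<le> (c * (\<beta> + 1)) * (\<alpha> * R) + \<beta> * R"
    using r0 c1 bpos by (intro add_right_mono mult_left_mono) auto
  also have "\<dots> = (c * \<alpha> * (\<beta> + 1) + \<beta>) * R" by (simp add: algebra_simps)
  also have "\<dots> = \<beta> * (\<beta> * R)" unfolding beq by (simp only: mult.assoc)
  finally have "\<beta> * Lf a < \<beta> * (\<beta> * R)" .
  then have "Lf a < \<beta> * R" using bpos by simp
  then show False using bLa by linarith
qed

end


theorem mainTheorem5:
  fixes N M :: "'p set" and k :: nat
    and dm dc :: "'p \<Rightarrow> 'p \<Rightarrow> real"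
    and \<alpha> c :: real
    and P :: "('p set \<times> 'p) list" and g :: "'p \<Rightarrow> nat" and pad :: "'p list"
  assumes "finite N" "N \<noteq> {}" "finite M" "M \<noteq> {}" "k > 0"
    and "pseudometric_on N dm"
    and "pseudometric_on (N \<union> M) dc"
    and "\<alpha> \<ge> 1"
    and "c = (3 * \<alpha> + sqrt (\<alpha> * (\<alpha> + 8))) / (4 * \<alpha>)"
    and "phase1_run N M k dm dc \<alpha> P"
    and "phase2_choice N dm dc c P g"
    and "set pad \<subseteq> M" and "length pad = k - length P"
  shows "in_core N M k dm dc ((\<alpha> + sqrt (\<alpha> * (\<alpha> + 8)) + 2) / 2)
           (algorithm_output N P g pad)"
proof -
  define \<beta> where "\<beta> = (\<alpha> + sqrt (\<alpha> * (\<alpha> + 8)) + 2) / 2"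
  note cf = consts_facts[OF assms(8) assms(9) \<beta>_def]
  interpret D: dmsetup N M k dm dc \<alpha> c P g pad
    using assms cf(1) by unfold_locales auto
  have "in_core N M k dm dc \<beta> (algorithm_output N P g pad)"
    using D.core_main[OF cf(2) cf(3) cf(4)] .
  then show ?thesis unfolding \<beta>_def .
qed

end
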